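(* Let $k_{11}>0$, $k_{22}>0$, $\mathbf{K}=\mathrm{diag}(k_{11},k_{22})$, $\mathbf{N}=\begin{pmatrix}0&\nu\\-\nu&0\end{pmatrix}$ with $\nu\in\mathbb{R}$, and let $\mathbf{D}'=\begin{pmatrix} d'_{11}&d'_{12}\\ d'_{12}&d'_{22}\end{pmatrix}$ be real symmetric positive definite. For $\varepsilon>0$ let $\nu^2_{\varepsilon}$ denote the supremum of those $\nu^2$ for which all roots of $\det(\lambda^2\mathbf{I}+\varepsilon\lambda\mathbf{D}'+\mathbf{K}+\mathbf{N})=0$ have negative real parts. Then: (i) $\lim_{\varepsilon\to0^+}\nu^2_\varepsilon=\nu_{cr}^2:=\dfrac{(k_{11}-k_{22})^2}{4}-\dfrac{(d'_{11}-d'_{22})^2(k_{11}-k_{22})^2}{4(d'_{11}+d'_{22})^2}$; (ii) in the undamped case, all roots of $\det(\lambda^2\mathbf{I}+\mathbf{K}+\mathbf{N})=0$ are purely imaginary and simple if and only if $\nu^2<\nu_0^2:=\dfrac{(k_{11}-k_{22})^2}{4}=\left(\dfrac{\mathrm{tr}\,\mathbf{K}}{2}\right)^2-\det\mathbf{K}$; (iii) $\nu_0^2-\nu_{cr}^2=\left[\dfrac{2\,\mathrm{tr}(\mathbf{K}\mathbf{D}')-\mathrm{tr}\,\mathbf{K}\,\mathrm{tr}\,\mathbf{D}'}{2\,\mathrm{tr}\,\mathbf{D}'}\right]^2\ge0$.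
   Context: $\mathbf{I}$ denotes the $2\times2$ identity matrix; $\mathrm{tr}$ denotes the trace. *)

theory Defs
  imports "HOL-Analysis.Analysis" "HOL-Computational_Algebra.Polynomial"
begin

definition mat2 :: "'a::zero \<Rightarrow> 'a \<Rightarrow> 'a \<Rightarrow> 'a \<Rightarrow> 'a^2^2" where
  "mat2 a b c d = vector [vector [a, b], vector [c, d]]"

definition Kmat :: "real \<Rightarrow> real \<Rightarrow> real^2^2" where
  "Kmat k11 k22 = mat2 k11 0 0 k22"

definition Nmat :: "real \<Rightarrow> real^2^2" where
  "Nmat \<nu> = mat2 0 \<nu> (- \<nu>) 0"

definition Dmat :: "real \<Rightarrow> real \<Rightarrow> real \<Rightarrow> real^2^2" where
  "Dmat d11 d12 d22 = mat2 d11 d12 d12 d22"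

definition charpoly :: "real \<Rightarrow> real^2^2 \<Rightarrow> real^2^2 \<Rightarrow> real^2^2 \<Rightarrow> complex poly" where
  "charpoly \<epsilon> D K N =
     det (\<chi> i j. [: complex_of_real (K $ i $ j + N $ i $ j),
                    complex_of_real (\<epsilon> * D $ i $ j),
                    complex_of_real (mat 1 $ i $ j) :] :: complex poly^2^2)"

definition all_roots_neg_re :: "complex poly \<Rightarrow> bool" where
  "all_roots_neg_re p \<longleftrightarrow> (\<forall>z. poly p z = 0 \<longrightarrow> Re z < 0)"

definition all_roots_imag_simple :: "complex poly \<Rightarrow> bool" where
  "all_roots_imag_simple p \<longleftrightarrow> (\<forall>z. poly p z = 0 \<longrightarrow> Re z = 0 \<and> order z p = 1)"

definition nu_sq_eps :: "real \<Rightarrow> real^2^2 \<Rightarrow> real \<Rightarrow> real \<Rightarrow> real" where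
  "nu_sq_eps \<epsilon> D k11 k22 =
     Sup {\<nu>^2 | \<nu>. all_roots_neg_re (charpoly \<epsilon> D (Kmat k11 k22) (Nmat \<nu>))}"

end

theory Submission imports Defs "HOL-Computational_Algebra.Fundamental_Theorem_Algebra" begin

definition Q4 :: "real \<Rightarrow> real \<Rightarrow> real \<Rightarrow> real \<Rightarrow> complex \<Rightarrow> complex" where
  "Q4 a1 a2 a3 a4 z = z^4 + of_real a1 * z^3 + of_real a2 * z^2 + of_real a3 * z + of_real a4"

lemma quad_pos:
  assumes "\<alpha> > 0" "\<beta> > 0" "w^2 + of_real \<alpha> * w + of_real \<beta> = (0::complex)"
  shows "Re w < 0"
proof -
  obtain x y where w: "w = Complex x y" by (cases w)
  have re: "x^2 - y^2 + \<alpha>*x + \<beta> = 0" and im: "2*x*y + \<alpha>*y = 0"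
    using assms(3) unfolding w by (simp_all add: complex_eq_iff power2_eq_square algebra_simps)
  show ?thesis
  proof (cases "y = 0")
    case True
    then have "x^2 + \<alpha>*x + \<beta> = 0" using re by simp
    have "x < 0"
    proof (rule ccontr)
      assume "\<not> x < 0"
      then have "\<alpha>*x \<ge> 0" using assms(1) by simp
      then show False using \<open>x^2 + \<alpha>*x + \<beta> = 0\<close> assms(2) zero_le_power2[of x] by linarith
    qed
    then show ?thesis unfolding w by simp
  next
    case False
    then have "2*x + \<alpha> = 0" using im by (metis distrib_right mult_eq_0_iff mult.commute)
    then show ?thesis using assms(1) unfolding w by simp
  qed
qed

lemma quad_stable:
  assumes "\<forall>w::complex. w^2 + of_real \<alpha> * w + of_real \<beta> = 0 \<longrightarrow> Re w < 0"
  shows "\<alpha> > 0 \<and> \<beta> > 0"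
proof (rule ccontr)
  assume nb: "\<not> (\<alpha> > 0 \<and> \<beta> > 0)"
  define disc where "disc = \<alpha>^2 - 4*\<beta>"
  show False
  proof (cases "disc \<ge> 0")
    case True
    define w where "w = complex_of_real ((-\<alpha> + sqrt disc)/2)"
    have s: "sqrt disc ^2 = disc" using True by simp
    have "w^2 + of_real \<alpha> * w + of_real \<beta> = of_real (((-\<alpha> + sqrt disc)/2)^2 + \<alpha>*((-\<alpha> + sqrt disc)/2) + \<beta>)"
      unfolding w_def by simp
    also have "((-\<alpha> + sqrt disc)/2)^2 + \<alpha>*((-\<alpha> + sqrt disc)/2) + \<beta> = 0"
      using s unfolding disc_def by (simp add: power2_eq_square field_simps)
    finally have "w^2 + of_real \<alpha> * w + of_real \<beta> = 0" by simp
    with assms have "Re w < 0" by blast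
    then have "sqrt disc < \<alpha>" unfolding w_def by simp
    moreover have "sqrt disc \<ge> 0" using True by simp
    moreover have "\<beta> \<le> 0 \<Longrightarrow> \<bar>\<alpha>\<bar> \<le> sqrt disc"
      using True unfolding disc_def by (intro real_le_rsqrt) (simp add: power2_abs)
    ultimately show False using nb by linarith
  next
    case False
    define w where "w = Complex (-\<alpha>/2) (sqrt (-disc)/2)"
    have s: "sqrt (-disc) ^2 = -disc" using False by simp
    have "w^2 + of_real \<alpha> * w + of_real \<beta> = 0"
      unfolding w_def using s unfolding disc_def
      by (simp add: complex_eq_iff power2_eq_square field_simps)
    with assms have "Re w < 0" by blast
    then have "\<alpha> > 0" unfolding w_def by simp
    moreover have "\<beta> > 0" using False unfolding disc_def
      by (smt (verit) zero_le_power2)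
    ultimately show False using nb by blast
  qed
qed

lemma pair_factor:
  fixes a1 a2 a3 a4 :: real and z :: complex
  assumes root: "Q4 a1 a2 a3 a4 z = 0" and nz: "Im z \<noteq> 0"
  shows "\<exists>\<alpha> \<beta> \<gamma> \<delta>::real. a1 = \<alpha> + \<gamma> \<and> a2 = \<beta> + \<alpha>*\<gamma> + \<delta> \<and> a3 = \<alpha>*\<delta> + \<gamma>*\<beta> \<and> a4 = \<beta>*\<delta>"
proof -
  define \<alpha> where "\<alpha> = -2 * Re z"
  define \<beta> where "\<beta> = Re z ^ 2 + Im z ^ 2"
  define \<gamma> where "\<gamma> = a1 - \<alpha>"
  define \<delta> where "\<delta> = a2 - \<beta> - \<alpha>*\<gamma>"
  define A where "A = a3 - \<alpha>*\<delta> - \<gamma>*\<beta>"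
  define B where "B = a4 - \<beta>*\<delta>"
  have idt: "Q4 a1 a2 a3 a4 l = (l^2 + of_real \<alpha> * l + of_real \<beta>) * (l^2 + of_real \<gamma> * l + of_real \<delta>)
      + of_real A * l + of_real B" for l
    unfolding Q4_def A_def B_def \<delta>_def \<gamma>_def
    by (simp add: algebra_simps power2_eq_square power3_eq_cube power4_eq_xxxx)
  have qz: "z^2 + of_real \<alpha> * z + of_real \<beta> = 0"
    unfolding \<alpha>_def \<beta>_def by (simp add: complex_eq_iff power2_eq_square algebra_simps)
  have "of_real A * z + of_real B = 0" using idt[of z] root qz by simp
  then have "A * Im z = 0" and "A * Re z + B = 0"
    by (simp_all add: complex_eq_iff)
  then have "A = 0" "B = 0" using nz by auto
  have "a1 = \<alpha> + \<gamma>" "a2 = \<beta> + \<alpha>*\<gamma> + \<delta>" unfolding \<gamma>_def \<delta>_def by simp_all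
  moreover have "a3 = \<alpha>*\<delta> + \<gamma>*\<beta>" "a4 = \<beta>*\<delta>" using \<open>A = 0\<close> \<open>B = 0\<close> unfolding A_def B_def by simp_all
  ultimately show ?thesis by blast
qed

lemma factor_exists:
  fixes a1 a2 a3 a4 :: real
  shows "\<exists>\<alpha> \<beta> \<gamma> \<delta>::real. a1 = \<alpha> + \<gamma> \<and> a2 = \<beta> + \<alpha>*\<gamma> + \<delta> \<and> a3 = \<alpha>*\<delta> + \<gamma>*\<beta> \<and> a4 = \<beta>*\<delta>"
proof -
  define p :: "complex poly" where "p = [:of_real a4, of_real a3, of_real a2, of_real a1, 1:]"
  have "\<not> constant (poly p)" unfolding constant_degree p_def by simp
  then obtain z where "poly p z = 0" using fundamental_theorem_of_algebra by blast
  then have root: "Q4 a1 a2 a3 a4 z = 0" unfolding p_def Q4_def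
    by (simp add: algebra_simps power2_eq_square power3_eq_cube power4_eq_xxxx)
  show ?thesis
  proof (cases "Im z = 0")
    case False then show ?thesis using pair_factor[OF root] by blast
  next
    case True
    define r1 where "r1 = Re z"
    have z: "z = of_real r1" using True unfolding r1_def by (simp add: complex_eq_iff)
    define c2 where "c2 = a1 + r1"
    define c1 where "c1 = a2 + r1*c2"
    define c0 where "c0 = a3 + r1*c1"
    have "of_real (r1^4 + a1*r1^3 + a2*r1^2 + a3*r1 + a4) = (0::complex)"
      using root unfolding z Q4_def by simp
    then have "r1^4 + a1*r1^3 + a2*r1^2 + a3*r1 + a4 = 0" by (simp only: of_real_eq_0_iff)
    then have a4: "a4 = - r1*c0" unfolding c0_def c1_def c2_def
      by (simp add: algebra_simps power2_eq_square power3_eq_cube power4_eq_xxxx)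
    have fac: "Q4 a1 a2 a3 a4 l = (l - of_real r1) * (l^3 + of_real c2 * l^2 + of_real c1 * l + of_real c0)" for l
      unfolding Q4_def a4 c0_def c1_def c2_def
      by (simp add: algebra_simps power2_eq_square power3_eq_cube power4_eq_xxxx)
    define c :: "complex poly" where "c = [:of_real c0, of_real c1, of_real c2, 1:]"
    have "\<not> constant (poly c)" unfolding constant_degree c_def by simp
    then obtain w where "poly c w = 0" using fundamental_theorem_of_algebra by blast
    then have cw: "w^3 + of_real c2 * w^2 + of_real c1 * w + of_real c0 = 0" unfolding c_def
      by (simp add: algebra_simps power2_eq_square power3_eq_cube)
    show ?thesis
    proof (cases "Im w = 0")
      case False
      have "Q4 a1 a2 a3 a4 w = 0" using fac[of w] cw by simp
      then show ?thesis using pair_factor False by blast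
    next
      case True
      define r2 where "r2 = Re w"
      have w: "w = of_real r2" using True unfolding r2_def by (simp add: complex_eq_iff)
      have "of_real (r2^3 + c2*r2^2 + c1*r2 + c0) = (0::complex)"
        using cw unfolding w by simp
      then have c0e: "r2^3 + c2*r2^2 + c1*r2 + c0 = 0" by (simp only: of_real_eq_0_iff)
      define e1 where "e1 = c2 + r2"
      define e0 where "e0 = c1 + r2*e1"
      have c0: "c0 = - r2*e0" using c0e unfolding e0_def e1_def
        by (simp add: algebra_simps power2_eq_square power3_eq_cube)
      have c2: "c2 = e1 - r2" and c1: "c1 = e0 - r2*e1" unfolding e0_def e1_def by simp_all
      have a1: "a1 = c2 - r1" and a2: "a2 = c1 - r1*c2" and a3: "a3 = c0 - r1*c1"
        unfolding c0_def c1_def c2_def by simp_all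
      show ?thesis
        apply (rule exI[of _ "-(r1+r2)"], rule exI[of _ "r1*r2"], rule exI[of _ e1], rule exI[of _ e0])
        unfolding a1 a2 a3 a4 c0 c1 c2 by (simp add: algebra_simps)
    qed
  qed
qed


lemma crit:
  fixes a1 a2 a3 a4 :: real
  assumes a1: "a1 > 0" and a3: "a3 > 0" and a4: "a4 > 0"
  shows "(\<forall>z. Q4 a1 a2 a3 a4 z = 0 \<longrightarrow> Re z < 0) \<longleftrightarrow> a1*a2*a3 - a3^2 - a1^2*a4 > 0"
proof -
  obtain \<alpha> \<beta> \<gamma> \<delta> :: real where e1: "a1 = \<alpha> + \<gamma>" and e2: "a2 = \<beta> + \<alpha>*\<gamma> + \<delta>"
    and e3: "a3 = \<alpha>*\<delta> + \<gamma>*\<beta>" and e4: "a4 = \<beta>*\<delta>"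
    using factor_exists by blast
  have fac: "Q4 a1 a2 a3 a4 l = (l^2 + of_real \<alpha> * l + of_real \<beta>) * (l^2 + of_real \<gamma> * l + of_real \<delta>)" for l
    unfolding Q4_def e1 e2 e3 e4
    by (simp add: algebra_simps power2_eq_square power3_eq_cube power4_eq_xxxx)
  have D: "a1*a2*a3 - a3^2 - a1^2*a4 = \<alpha>*\<gamma>*((\<beta>-\<delta>)^2 + a1*a3)"
    unfolding e1 e2 e3 e4 by (simp add: algebra_simps power2_eq_square)
  have br: "(\<beta>-\<delta>)^2 + a1*a3 > 0" using a1 a3
    by (simp add: add_nonneg_pos)
  show ?thesis
  proof
    assume st: "\<forall>z. Q4 a1 a2 a3 a4 z = 0 \<longrightarrow> Re z < 0"
    have "\<alpha> > 0 \<and> \<beta> > 0" by (rule quad_stable) (use st fac in auto)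
    moreover have "\<gamma> > 0 \<and> \<delta> > 0" by (rule quad_stable) (use st fac in auto)
    ultimately show "a1*a2*a3 - a3^2 - a1^2*a4 > 0" unfolding D using br by simp
  next
    assume "a1*a2*a3 - a3^2 - a1^2*a4 > 0"
    then have ag: "\<alpha>*\<gamma> > 0" unfolding D using br by (simp add: zero_less_mult_iff)
    then have "\<alpha> > 0" "\<gamma> > 0" using a1 unfolding e1 by (auto simp: zero_less_mult_iff)
    moreover have "\<beta> > 0 \<and> \<delta> > 0"
    proof -
      have "\<beta>*\<delta> > 0" using a4 e4 by simp
      moreover have "\<not> (\<beta> < 0 \<and> \<delta> < 0)"
      proof
        assume "\<beta> < 0 \<and> \<delta> < 0"
        then have "\<alpha>*\<delta> < 0" "\<gamma>*\<beta> < 0" using \<open>\<alpha> > 0\<close> \<open>\<gamma> > 0\<close> by (auto simp: mult_pos_neg)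
        then show False using a3 e3 by linarith
      qed
      ultimately show ?thesis by (auto simp: zero_less_mult_iff)
    qed
    ultimately show "\<forall>z. Q4 a1 a2 a3 a4 z = 0 \<longrightarrow> Re z < 0"
      using fac quad_pos by (metis mult_eq_0_iff)
  qed
qed


lemma charpoly_eq:
  "charpoly e (Dmat d11 d12 d22) (Kmat k11 k22) (Nmat \<nu>) =
    [:of_real(k11*k22+\<nu>^2), of_real(e*(d11*k22+d22*k11)), of_real(k11+k22+e^2*(d11*d22-d12^2)),
      of_real(e*(d11+d22)), 1:]"
proof -
  have "charpoly e (Dmat d11 d12 d22) (Kmat k11 k22) (Nmat \<nu>) =
     [:of_real k11, of_real (e*d11), 1:] * [:of_real k22, of_real (e*d22), 1:]
     - [:of_real \<nu>, of_real (e*d12), 0:] * [:of_real (-\<nu>), of_real (e*d12), 0:]"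
    unfolding charpoly_def det_2 Kmat_def Nmat_def Dmat_def mat2_def
    by (simp add: mat_def)
  also have "\<dots> = [:of_real(k11*k22+\<nu>^2), of_real(e*(d11*k22+d22*k11)), of_real(k11+k22+e^2*(d11*d22-d12^2)),
      of_real(e*(d11+d22)), 1:]"
    by (simp add: algebra_simps power2_eq_square)
  finally show ?thesis .
qed


lemma quadform: "(vector [a, b] :: real^2) \<bullet> (Dmat d11 d12 d22 *v vector [a, b]) = d11*a^2 + 2*d12*a*b + d22*b^2"
  unfolding Dmat_def mat2_def
  by (simp add: matrix_vector_mult_def inner_vec_def sum_2 power2_eq_square algebra_simps)

lemma vec2_nz: "(vector [a, b] :: real^2) \<noteq> 0 \<longleftrightarrow> a \<noteq> 0 \<or> b \<noteq> 0"
  by (auto simp: vec_eq_iff forall_2)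

lemma posdef_facts:
  assumes posdef: "\<forall>x::real^2. x \<noteq> 0 \<longrightarrow> x \<bullet> (Dmat d11 d12 d22 *v x) > 0"
  shows "d11 > 0" "d22 > 0" "d11*d22 - d12^2 > 0"
proof -
  show "d11 > 0" using posdef[rule_format, of "vector [1,0]"] by (simp add: quadform vec2_nz)
  show "d22 > 0" using posdef[rule_format, of "vector [0,1]"] by (simp add: quadform vec2_nz)
  have "d11*d12^2 - 2*d12*d12*d11 + d22*d11^2 > 0"
    using posdef[rule_format, of "vector [d12,-d11]"] \<open>d11 > 0\<close> by (simp add: quadform vec2_nz)
  then have "d11*(d11*d22 - d12^2) > 0" by (simp add: algebra_simps power2_eq_square)
  then show "d11*d22 - d12^2 > 0" using \<open>d11 > 0\<close> by (simp add: zero_less_mult_iff)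
qed


lemma stab_eps:
  fixes k11 k22 d11 d12 d22 e \<nu> :: real
  assumes k: "k11 > 0" "k22 > 0" and d: "d11 > 0" "d22 > 0" "d11*d22 - d12^2 > 0" and e: "e > 0"
  shows "all_roots_neg_re (charpoly e (Dmat d11 d12 d22) (Kmat k11 k22) (Nmat \<nu>)) \<longleftrightarrow>
     \<nu>^2 < ((d11+d22)*(d11*k22+d22*k11)*(k11+k22+e^2*(d11*d22-d12^2)) - (d11*k22+d22*k11)^2)/(d11+d22)^2 - k11*k22"
proof -
  define t where "t = d11+d22"
  define p where "p = d11*k22+d22*k11"
  define a2 where "a2 = k11+k22+e^2*(d11*d22-d12^2)"
  define a4 where "a4 = k11*k22+\<nu>^2"
  have t: "t > 0" unfolding t_def using d by simp
  have pp: "p > 0" unfolding p_def using d k by (simp add: add_pos_pos)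
  have a4: "a4 > 0" unfolding a4_def using k by (simp add: add_pos_nonneg)
  have ev: "poly (charpoly e (Dmat d11 d12 d22) (Kmat k11 k22) (Nmat \<nu>)) z = Q4 (e*t) a2 (e*p) a4 z" for z
    unfolding charpoly_eq Q4_def t_def p_def a2_def a4_def
    by (simp add: algebra_simps power2_eq_square power3_eq_cube power4_eq_xxxx)
  have "all_roots_neg_re (charpoly e (Dmat d11 d12 d22) (Kmat k11 k22) (Nmat \<nu>)) \<longleftrightarrow>
     (e*t)*a2*(e*p) - (e*p)^2 - (e*t)^2*a4 > 0"
    unfolding all_roots_neg_re_def ev
    by (rule crit) (use e t pp a4 in auto)
  also have "(e*t)*a2*(e*p) - (e*p)^2 - (e*t)^2*a4 = e^2 * (t*p*a2 - p^2 - t^2*a4)"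
    by (simp add: algebra_simps power2_eq_square)
  also have "0 < e^2 * (t*p*a2 - p^2 - t^2*a4) \<longleftrightarrow> 0 < t*p*a2 - p^2 - t^2*a4"
    using e by (simp add: zero_less_mult_iff)
  also have "\<dots> \<longleftrightarrow> \<nu>^2 < (t*p*a2 - p^2)/t^2 - k11*k22"
    unfolding a4_def using t by (simp add: field_simps)
  finally show ?thesis unfolding t_def p_def a2_def .
qed


lemma order_one_iff:
  fixes p :: "complex poly"
  assumes "p \<noteq> 0" "poly p z = 0" "pderiv p \<noteq> 0"
  shows "order z p = 1 \<longleftrightarrow> poly (pderiv p) z \<noteq> 0"
  using order_pderiv[OF assms(1,2)] order_root[of "pderiv p" z] assms(3) by auto

lemma undamped:
  fixes k11 k22 d11 d12 d22 \<nu> :: real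
  assumes k: "k11 > 0" "k22 > 0"
  shows "all_roots_imag_simple (charpoly 0 (Dmat d11 d12 d22) (Kmat k11 k22) (Nmat \<nu>)) \<longleftrightarrow>
     \<nu>^2 < (k11 - k22)^2/4"
proof -
  define s where "s = k11 + k22"
  define c where "c = k11*k22 + \<nu>^2"
  define disc where "disc = s^2 - 4*c"
  have s: "s > 0" unfolding s_def using k by simp
  have c: "c > 0" unfolding c_def using k by (simp add: add_pos_nonneg)
  have de: "\<nu>^2 < (k11 - k22)^2/4 \<longleftrightarrow> disc > 0"
    unfolding disc_def s_def c_def by (simp add: algebra_simps power2_eq_square)
  define P where "P = charpoly 0 (Dmat d11 d12 d22) (Kmat k11 k22) (Nmat \<nu>)"
  have P: "P = [:of_real c, 0, of_real s, 0, 1:]"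
    unfolding P_def charpoly_eq s_def c_def by simp
  have Pnz: "P \<noteq> 0" unfolding P by simp
  have ev: "poly P z = z^4 + of_real s * z^2 + of_real c" for z
    unfolding P by (simp add: algebra_simps power2_eq_square power3_eq_cube power4_eq_xxxx)
  have dnz: "pderiv P \<noteq> 0" unfolding P by (simp add: pderiv_pCons)
  have dev: "poly (pderiv P) z = 2*z*(2*z^2 + of_real s)" for z
    unfolding P by (simp add: pderiv_pCons algebra_simps power2_eq_square power3_eq_cube)
  show ?thesis
    unfolding P_def[symmetric] de all_roots_imag_simple_def
  proof (intro iffI)
    assume H: "\<forall>z. poly P z = 0 \<longrightarrow> Re z = 0 \<and> order z P = 1"
    show "0 < disc"
    proof (rule ccontr)
    assume nd: "\<not> 0 < disc"
    show False
    proof (cases "disc = 0")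
      case True
      define z where "z = Complex 0 (sqrt (s/2))"
      have sq: "sqrt (s/2)^2 = s/2" using s by simp
      have z2: "z^2 = - of_real (s/2)" unfolding z_def
        using sq by (simp add: complex_eq_iff power2_eq_square)
      have z4: "z^4 = of_real ((s/2)^2)"
      proof -
        have "z^4 = (z^2)^2" by simp
        then show ?thesis using z2 by simp
      qed
      have "poly P z = of_real ((s/2)^2 + s*(-(s/2)) + c)" unfolding ev z4 z2 by simp
      also have "(s/2)^2 + s*(-(s/2)) + c = 0" using True unfolding disc_def
        by (simp add: field_simps power2_eq_square)
      finally have "poly P z = 0" by simp
      moreover have "poly (pderiv P) z = 0" unfolding dev z2 by simp
      ultimately show False using H order_one_iff[OF Pnz _ dnz] by blast
    next
      case False
      then have dn: "disc < 0" using nd by simp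
      have "\<not> constant (poly P)" unfolding constant_degree P by simp
      then obtain z where root: "poly P z = 0" using fundamental_theorem_of_algebra by blast
      then have "Re z = 0" using H by blast
      then obtain y where z: "z = Complex 0 y" by (metis complex.exhaust_sel)
      have "z^2 = of_real (- (y^2))" unfolding z by (simp add: complex_eq_iff power2_eq_square)
      moreover have "z^4 = (z^2)^2" by simp
      ultimately have "of_real ((y^2)^2 - s*y^2 + c) = (0::complex)" using root unfolding ev
        by (simp add: power2_eq_square)
      then have "(y^2)^2 - s*y^2 + c = 0" by (simp only: of_real_eq_0_iff)
      moreover have "(y^2)^2 - s*y^2 + c = (y^2 - s/2)^2 - disc/4"
        unfolding disc_def by (simp add: power2_eq_square field_simps)
      ultimately show False using dn using zero_le_power2[of "y^2 - s/2"] by linarith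
    qed
    qed
  next
    assume dp: "0 < disc"
    define sd where "sd = sqrt disc"
    have sd: "sd > 0" "sd^2 = disc" unfolding sd_def using dp by simp_all
    have sds: "sd < s"
    proof -
      have "sd^2 < s^2" using sd c unfolding disc_def by simp
      then show ?thesis using s sd by (smt (verit) power_mono zero_le_power2)
    qed
    define m1 where "m1 = (-s + sd)/2"
    define m2 where "m2 = (-s - sd)/2"
    have m: "m1 < 0" "m2 < 0" unfolding m1_def m2_def using sds sd by simp_all
    have fac: "poly P z = (z^2 - of_real m1) * (z^2 - of_real m2)" for z
    proof -
      have cc: "c = m1*m2" using sd(2) unfolding m1_def m2_def disc_def
        by (simp add: field_simps power2_eq_square)
      have ss: "s = -(m1+m2)" unfolding m1_def m2_def by (simp add: field_simps)
      show ?thesis unfolding ev cc ss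
        by (simp add: algebra_simps power2_eq_square power4_eq_xxxx)
    qed
    show "\<forall>z. poly P z = 0 \<longrightarrow> Re z = 0 \<and> order z P = 1"
    proof (intro allI impI)
      fix z assume root: "poly P z = 0"
      then obtain m where m: "m = m1 \<or> m = m2" and zm: "z^2 = of_real m" using fac by auto
      have mneg: "m < 0" using m m1_def m2_def \<open>m1 < 0\<close> \<open>m2 < 0\<close> by auto
      obtain x y where z: "z = Complex x y" by (cases z)
      have "x^2 - y^2 = m" "2*x*y = 0" using zm unfolding z by (simp_all add: complex_eq_iff power2_eq_square)
      then have re: "Re z = 0" unfolding z using mneg
        by (auto simp: power2_eq_square)
      have "z \<noteq> 0" using root c unfolding ev by auto
      moreover have "2*z^2 + of_real s \<noteq> 0"
      proof
        assume "2*z^2 + of_real s = 0"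
        then have "of_real (2*m + s) = (0::complex)" unfolding zm by simp
        then have "2*m + s = 0" by (simp only: of_real_eq_0_iff)
        then show False using m sd unfolding m1_def m2_def by auto
      qed
      ultimately have "poly (pderiv P) z \<noteq> 0" unfolding dev by simp
      then show "Re z = 0 \<and> order z P = 1" using re order_one_iff[OF Pnz root dnz] by simp
    qed
  qed
qed


lemma fe_id:
  fixes d11 d22 d12 k11 k22 e t :: real
  assumes "t = d11 + d22" "t \<noteq> 0"
  shows "(t*(d11*k22+d22*k11)*(k11+k22+e^2*(d11*d22-d12^2)) - (d11*k22+d22*k11)^2)/t^2 - k11*k22
   = ((k11 - k22)^2 / 4 - (d11 - d22)^2 * (k11 - k22)^2 / (4 * t^2)) + e^2 * ((d11*k22+d22*k11)*(d11*d22-d12^2)/t)"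
  using assms(2) apply (simp add: field_simps) using assms(1) by algebra
lemma ncr_id:
  fixes d11 d22 d12 k11 k22 e t :: real
  assumes "t = d11 + d22" "t \<noteq> 0"
  shows "(k11 - k22)^2 / 4 - (d11 - d22)^2 * (k11 - k22)^2 / (4 * t^2) = (k11-k22)^2*d11*d22/t^2"
  using assms(2) apply (simp add: field_simps) using assms(1) by algebra
lemma iii_id:
  fixes d11 d22 d12 k11 k22 e t :: real
  assumes "t = d11 + d22" "t \<noteq> 0"
  shows "(k11 - k22)^2 / 4 - ((k11 - k22)^2 / 4 - (d11 - d22)^2 * (k11 - k22)^2 / (4 * t^2))
     = ((2 * (k11*d11 + k22*d22) - (k11+k22)*t) / (2 * t))^2"
  using assms(2) apply (simp add: field_simps) using assms(1) by algebra

theorem mainTheorem5: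
  fixes k11 k22 d11 d12 d22 :: real
  assumes "k11 > 0" and "k22 > 0"
    and posdef: "\<forall>x::real^2. x \<noteq> 0 \<longrightarrow> x \<bullet> (Dmat d11 d12 d22 *v x) > 0"
  defines "K \<equiv> Kmat k11 k22" and "D \<equiv> Dmat d11 d12 d22"
    and "nu_cr_sq \<equiv> (k11 - k22)^2 / 4
                      - (d11 - d22)^2 * (k11 - k22)^2 / (4 * (d11 + d22)^2)"
    and "nu0_sq \<equiv> (k11 - k22)^2 / 4"
  shows "(((\<lambda>\<epsilon>. nu_sq_eps \<epsilon> D k11 k22) \<longlongrightarrow> nu_cr_sq) (at_right 0))
       \<and> (nu0_sq = (trace K / 2)^2 - det K)
       \<and> (\<forall>\<nu>::real. all_roots_imag_simple (charpoly 0 D K (Nmat \<nu>)) \<longleftrightarrow> \<nu>^2 < nu0_sq)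
       \<and> (nu0_sq - nu_cr_sq
           = ((2 * trace (K ** D) - trace K * trace D) / (2 * trace D))^2)
       \<and> (nu0_sq - nu_cr_sq \<ge> 0)"
proof -
  note k = assms(1,2)
  note d = posdef_facts[OF posdef]
  have t: "d11 + d22 > 0" using d by simp
  define f where "f e = ((d11+d22)*(d11*k22+d22*k11)*(k11+k22+e^2*(d11*d22-d12^2)) - (d11*k22+d22*k11)^2)/(d11+d22)^2 - k11*k22" for e
  define tt where "tt = d11 + d22"
  have tt: "tt \<noteq> 0" using t unfolding tt_def by simp
  have fe: "f e = nu_cr_sq + e^2 * ((d11*k22+d22*k11)*(d11*d22-d12^2)/(d11+d22))" for e
    unfolding f_def nu_cr_sq_def by (rule fe_id) (use t in auto)
  have ncr: "nu_cr_sq = (k11-k22)^2*d11*d22/(d11+d22)^2"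
    unfolding nu_cr_sq_def by (rule ncr_id) (use t in auto)
  have ncr0: "nu_cr_sq \<ge> 0" unfolding ncr using d by simp
  have fpos: "f e > 0" if "e > 0" for e
  proof -
    have "(d11*k22+d22*k11)*(d11*d22-d12^2)/(d11+d22) > 0"
      using d k t by (simp add: add_pos_pos)
    then have "e^2 * ((d11*k22+d22*k11)*(d11*d22-d12^2)/(d11+d22)) > 0" using that by (intro mult_pos_pos) simp_all
    then show ?thesis unfolding fe using ncr0 by linarith
  qed
  have nse: "nu_sq_eps e D k11 k22 = f e" if e: "e > 0" for e
  proof -
    have st: "all_roots_neg_re (charpoly e D (Kmat k11 k22) (Nmat \<nu>)) \<longleftrightarrow> \<nu>^2 < f e" for \<nu>
      unfolding D_def f_def by (rule stab_eps[OF k d e])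
    have "{\<nu>^2 | \<nu>. all_roots_neg_re (charpoly e D (Kmat k11 k22) (Nmat \<nu>))} = {0..<f e}"
    proof (intro set_eqI iffI)
      fix x assume "x \<in> {\<nu>^2 | \<nu>. all_roots_neg_re (charpoly e D (Kmat k11 k22) (Nmat \<nu>))}"
      then obtain \<nu> where "x = \<nu>^2" "all_roots_neg_re (charpoly e D (Kmat k11 k22) (Nmat \<nu>))" by blast
      then show "x \<in> {0..<f e}" using st by simp
    next
      fix x assume x: "x \<in> {0..<f e}"
      then have "(sqrt x)^2 < f e" by simp
      then have "all_roots_neg_re (charpoly e D (Kmat k11 k22) (Nmat (sqrt x)))"
        using st by blast
      moreover have "x = (sqrt x)^2" using x by simp
      ultimately show "x \<in> {\<nu>^2 | \<nu>. all_roots_neg_re (charpoly e D (Kmat k11 k22) (Nmat \<nu>))}" by blast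
    qed
    then show ?thesis unfolding nu_sq_eps_def using fpos[OF e] by simp
  qed
  have lim: "((\<lambda>\<epsilon>. nu_sq_eps \<epsilon> D k11 k22) \<longlongrightarrow> nu_cr_sq) (at_right 0)"
  proof -
    have "(f \<longlongrightarrow> nu_cr_sq + 0^2 * ((d11*k22+d22*k11)*(d11*d22-d12^2)/(d11+d22))) (at_right 0)"
      unfolding fe by (intro tendsto_intros)
    then have "(f \<longlongrightarrow> nu_cr_sq) (at_right 0)" by simp
    moreover have ev: "\<forall>\<^sub>F e in at_right (0::real). nu_sq_eps e D k11 k22 = f e"
      using eventually_at_right_less[of "0::real"] by (rule eventually_mono) (rule nse)
    ultimately show ?thesis using tendsto_cong[OF ev] by blast
  qed
  have tr: "nu0_sq = (trace K / 2)^2 - det K"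
    unfolding nu0_sq_def K_def Kmat_def mat2_def trace_def det_2 sum_2
    by (simp add: field_simps power2_eq_square)
  have ud: "\<forall>\<nu>::real. all_roots_imag_simple (charpoly 0 D K (Nmat \<nu>)) \<longleftrightarrow> \<nu>^2 < nu0_sq"
    unfolding D_def K_def nu0_sq_def using undamped[OF k] by blast
  have trKD: "trace (K ** D) = k11*d11 + k22*d22"
    unfolding K_def D_def Kmat_def Dmat_def mat2_def trace_def sum_2 matrix_matrix_mult_def by simp
  have trK: "trace K = k11 + k22" unfolding K_def Kmat_def mat2_def trace_def sum_2 by simp
  have trD: "trace D = d11 + d22" unfolding D_def Dmat_def mat2_def trace_def sum_2 by simp
  have iii: "nu0_sq - nu_cr_sq = ((2 * trace (K ** D) - trace K * trace D) / (2 * trace D))^2"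
    unfolding nu0_sq_def nu_cr_sq_def trKD trK trD by (rule iii_id) (use t in auto)
  have iv: "nu0_sq - nu_cr_sq \<ge> 0"
    unfolding iii by simp
  show ?thesis using lim tr ud iii iv by blast
qed

end
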